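(* For every integer $n\ge2$, $$\sum_{i=1}^{n-1}(-1)^i\binom{n}{i}\xi(i-n)=\frac{(-1)^{n+1}}{n+1}+\frac{(-1)^n}{2^n}.$$
   Context: $\xi(s)=\sum_{n\ge1}(n-\tfrac12)^{-s}=(2^s-1)\zeta(s)$, extended to all $s$ by analytic continuation. *)

theory Defs
  imports "HOL-Complex_Analysis.Complex_Analysis"
begin

text \<open>xi(s) = sum_{n>=1} (n - 1/2)^(-s) for Re s > 1, extended by analytic
  continuation to the complex plane minus the pole s = 1.  Here the series is
  indexed from 0, i.e. the terms are (m + 1/2)^(-s) for m = 0,1,2,...\<close>

definition xi_series_ext :: "(complex \<Rightarrow> complex) \<Rightarrow> bool" where
  "xi_series_ext f \<longleftrightarrow> f holomorphic_on (- {1}) \<and>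
     (\<forall>s. 1 < Re s \<longrightarrow>
        (\<lambda>m. complex_of_real (real m + 1/2) powr (- s)) sums f s)"

definition xi :: "complex \<Rightarrow> complex" where
  "xi s = (THE z. \<exists>f. xi_series_ext f \<and> f s = z)"

end

theory Submission
  imports Defs
begin

lemma infsum_nat_eq_suminf:
  fixes f :: "nat \<Rightarrow> complex"
  assumes "summable (\<lambda>n. norm (f n))"
  shows "infsum f UNIV = suminf f" "f summable_on UNIV"
proof -
  have s: "summable f" using assms summable_norm_cancel by blast
  have "(f has_sum suminf f) UNIV"
    using norm_summable_imp_has_sum[OF assms summable_sums[OF s]] .
  then show "infsum f UNIV = suminf f" "f summable_on UNIV"
    by (auto simp: infsumI summable_on_def)
qed

lemma infsum_nat_eq_suminf_real:
  fixes f :: "nat \<Rightarrow> real"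
  assumes "summable f" "\<And>n. f n \<ge> 0"
  shows "infsum f UNIV = suminf f"
proof -
  have "summable (\<lambda>n. norm (f n))" using assms by simp
  then have "(f has_sum suminf f) UNIV"
    by (rule norm_summable_imp_has_sum) (rule summable_sums[OF assms(1)])
  then show ?thesis by (rule infsumI)
qed

lemma double_sum_swap:
  fixes f :: "nat \<Rightarrow> nat \<Rightarrow> complex"
  assumes row: "\<And>j. summable (\<lambda>m. norm (f j m))"
    and tot: "summable (\<lambda>j. \<Sum>m. norm (f j m))"
  shows "(\<lambda>j. \<Sum>m. f j m) sums (\<Sum>m. \<Sum>j. f j m)"
proof -
  have rowi: "infsum (\<lambda>m. norm (f j m)) UNIV = (\<Sum>m. norm (f j m))" for j
    by (rule infsum_nat_eq_suminf_real) (use row in auto)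
  have "Infinite_Sum.abs_summable_on (\<lambda>(j,m). f j m) (UNIV \<times> UNIV)"
    apply (rule Infinite_Sum.abs_summable_on_Sigma_iff[where A=UNIV and B="\<lambda>_. UNIV", THEN iffD2])
    using row tot by (auto simp: rowi summable_on_UNIV_nonneg_real_iff suminf_nonneg)
  then have S: "(\<lambda>(j,m). f j m) summable_on UNIV \<times> UNIV"
    by (rule abs_summable_summable)
  have col: "summable (\<lambda>j. norm (f j m))" for m
  proof (rule summable_comparison_test[OF _ tot])
    show "\<exists>N. \<forall>n\<ge>N. norm (norm (f n m)) \<le> (\<Sum>m. norm (f n m))"
      using sum_le_suminf[OF row, of "{m}"] by auto
  qed
  have rowI: "infsum (f j) UNIV = suminf (f j)" for j
    using infsum_nat_eq_suminf(1)[OF row] .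
  have colI: "infsum (\<lambda>j. f j m) UNIV = (\<Sum>j. f j m)" for m
    using infsum_nat_eq_suminf(1)[OF col] .
  have sw: "infsum (\<lambda>j. infsum (\<lambda>m. f j m) UNIV) UNIV = infsum (\<lambda>m. infsum (\<lambda>j. f j m) UNIV) UNIV"
    by (rule infsum_swap_banach[OF S])
  have R: "(\<lambda>j. infsum (f j) UNIV) summable_on UNIV"
    using summable_on_Sigma_banach[of f UNIV "\<lambda>_. UNIV"] S by auto
  have S2: "(\<lambda>(m,j). f j m) summable_on UNIV \<times> UNIV"
    using S summable_on_swap[of "\<lambda>(j,m). f j m" UNIV UNIV] by (simp add: case_prod_unfold)
  have C: "(\<lambda>m. infsum (\<lambda>j. f j m) UNIV) summable_on UNIV"
    using summable_on_Sigma_banach[of "\<lambda>m j. f j m" UNIV "\<lambda>_. UNIV"] S2 by auto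
  have 1: "(\<lambda>j. suminf (f j)) sums infsum (\<lambda>j. infsum (f j) UNIV) UNIV"
    using has_sum_imp_sums[OF has_sum_infsum[OF R]] by (simp add: rowI)
  have 2: "(\<lambda>m. \<Sum>j. f j m) sums infsum (\<lambda>m. infsum (\<lambda>j. f j m) UNIV) UNIV"
    using has_sum_imp_sums[OF has_sum_infsum[OF C]] by (simp add: colI)
  show ?thesis using 1 2 sw sums_unique[OF 2] by (metis rowI)
qed
definition aa :: "nat \<Rightarrow> real" where "aa m = real m + 3/2"

lemma aa_pos: "0 < aa m" and aa_ge: "3/2 \<le> aa m" and aa_Suc: "aa m - 1 = real m + 1/2"
  by (auto simp: aa_def)

lemma powr_32: "(3/2::real) powr (-x) = (2/3) powr x"
proof -
  have "(3/2::real) powr (-x) = inverse (3/2) powr x" by (simp only: powr_minus inverse_powr)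
  then show ?thesis by simp
qed

definition Wr :: "real \<Rightarrow> real" where "Wr \<sigma> = (\<Sum>m. aa m powr (-\<sigma>))"

lemma summable_Wr: assumes "1 < \<sigma>" shows "summable (\<lambda>m. aa m powr (-\<sigma>))"
proof -
  have "summable (\<lambda>n. real n powr (-\<sigma>))" using assms by (simp add: summable_real_powr_iff)
  then have s1: "summable (\<lambda>n. real (n + 1) powr (-\<sigma>))"
    by (rule summable_ignore_initial_segment)
  show ?thesis
  proof (rule summable_comparison_test[OF _ s1])
    show "\<exists>N. \<forall>n\<ge>N. norm (aa n powr (-\<sigma>)) \<le> real (n + 1) powr (-\<sigma>)"
      using assms by (auto intro!: powr_mono2' simp: aa_def)
  qed
qed

lemma Wr_nonneg: "1 < \<sigma> \<Longrightarrow> 0 \<le> Wr \<sigma>"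
  unfolding Wr_def by (intro suminf_nonneg summable_Wr) auto

lemma Wr_decay: assumes "1 < \<tau>" "\<tau> \<le> \<sigma>" shows "Wr \<sigma> \<le> (2/3) powr (\<sigma> - \<tau>) * Wr \<tau>"
proof -
  have le: "aa m powr (-\<sigma>) \<le> (2/3) powr (\<sigma> - \<tau>) * aa m powr (-\<tau>)" for m
  proof -
    have e1: "aa m powr (-\<sigma>) = aa m powr (-\<tau>) * aa m powr (-(\<sigma> - \<tau>))"
      by (simp flip: powr_add)
    have "aa m powr (-(\<sigma> - \<tau>)) \<le> (3/2) powr (-(\<sigma> - \<tau>))"
      using assms aa_ge[of m] by (intro powr_mono2') auto
    then have e2: "aa m powr (-(\<sigma> - \<tau>)) \<le> (2/3) powr (\<sigma> - \<tau>)"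
      by (simp only: powr_32)
    show ?thesis unfolding e1
      using mult_left_mono[OF e2, of "aa m powr (-\<tau>)"] by (simp add: mult.commute)
  qed
  have "Wr \<sigma> \<le> (\<Sum>m. (2/3) powr (\<sigma> - \<tau>) * aa m powr (-\<tau>))"
    unfolding Wr_def using le summable_Wr assms
    by (intro suminf_le) (auto intro!: summable_mult)
  also have "\<dots> = (2/3) powr (\<sigma> - \<tau>) * Wr \<tau>"
    unfolding Wr_def using summable_Wr assms by (intro suminf_mult) auto
  finally show ?thesis .
qed

definition Wz :: "complex \<Rightarrow> complex" where
  "Wz s = (\<Sum>m. complex_of_real (aa m) powr (-s))"

lemma norm_term: "norm (complex_of_real (aa m) powr s) = aa m powr (Re s)"
  by (subst norm_powr_real_powr) (auto simp: aa_pos less_imp_le)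

lemma Wz_summable: assumes "1 < Re s"
  shows "summable (\<lambda>m. norm (complex_of_real (aa m) powr (-s)))"
  using summable_Wr[OF assms] by (simp add: norm_term)

lemma Wz_norm: assumes "1 < Re s" shows "norm (Wz s) \<le> Wr (Re s)"
proof -
  have "norm (Wz s) \<le> (\<Sum>m. norm (complex_of_real (aa m) powr (-s)))"
    unfolding Wz_def by (rule summable_norm[OF Wz_summable[OF assms]])
  then show ?thesis by (simp add: norm_term Wr_def)
qed

lemma norm_gchoose_le: "norm ((z::complex) gchoose k) \<le> pochhammer (norm z) k / fact k"
proof -
  have "norm (z gchoose k) = norm (\<Prod>i=0..<k. z - of_nat i) / fact k"
    by (simp add: gbinomial_prod_rev norm_divide)
  also have "norm (\<Prod>i=0..<k. z - of_nat i) = (\<Prod>i=0..<k. norm (z - of_nat i))"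
    by (simp add: prod_norm)
  also have "\<dots> \<le> (\<Prod>i=0..<k. norm z + of_nat i)"
    by (intro prod_mono) (auto intro: order_trans[OF norm_triangle_ineq4])
  finally show ?thesis
    by (simp add: pochhammer_prod divide_right_mono)
qed

lemma poch_mono: "0 \<le> (a::real) \<Longrightarrow> a \<le> b \<Longrightarrow> pochhammer a k \<le> pochhammer b k"
  unfolding pochhammer_prod by (intro prod_mono) auto

lemma summable_poch: fixes r x :: real assumes "0 \<le> x" "x < 1"
  shows "summable (\<lambda>k. pochhammer r k / fact k * x ^ k)"
proof -
  have "(\<lambda>n. ((-r) gchoose n) * (-x)^n) sums (1 + (-x)) powr (-r)"
    using assms by (intro gen_binomial_real) auto
  moreover have "((-r) gchoose n) * (-x)^n = pochhammer r n / fact n * x ^ n" for n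
    by (simp add: gbinomial_pochhammer power_minus' power_mult_distrib)
  ultimately show ?thesis by (auto simp: sums_iff)
qed

lemma holo_suminf:
  fixes t :: "nat \<Rightarrow> complex \<Rightarrow> complex"
  assumes S: "open S" and hol: "\<And>i. t i holomorphic_on S"
   and bnd: "\<And>x. x \<in> S \<Longrightarrow> \<exists>d>0. cball x d \<subseteq> S \<and> (\<exists>M. summable M \<and> (\<forall>i. \<forall>y\<in>cball x d. norm (t i y) \<le> M i))"
  shows "(\<lambda>x. \<Sum>i. t i x) holomorphic_on S"
proof (rule holomorphic_uniform_sequence[where f="\<lambda>n x. \<Sum>i<n. t i x"])
  show "open S" by fact
  show "(\<lambda>x. \<Sum>i<n. t i x) holomorphic_on S" for n
    using hol by (intro holomorphic_on_sum) auto
  fix x assume "x \<in> S"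
  then obtain d M where d1: "d > 0" and d2: "cball x d \<subseteq> S" and d3: "summable M"
     and d4: "\<forall>i. \<forall>y\<in>cball x d. norm (t i y) \<le> M i"
    using bnd by meson
  have "uniform_limit (cball x d) (\<lambda>n x. \<Sum>i<n. t i x) (\<lambda>x. \<Sum>i. t i x) sequentially"
    by (rule Weierstrass_m_test[where M=M, OF _ d3]) (use d4 in blast)
  with d1 d2 show "\<exists>d>0. cball x d \<subseteq> S \<and> uniform_limit (cball x d) (\<lambda>n x. \<Sum>i<n. t i x) (\<lambda>x. \<Sum>i. t i x) sequentially"
    by blast
qed

lemma re_cball: "y \<in> cball x d \<Longrightarrow> Re x - d \<le> Re y \<and> norm y \<le> norm x + d"
proof -
  assume "y \<in> cball x d"
  then have "norm (x - y) \<le> d" by (simp add: dist_norm)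
  moreover have "\<bar>Re (x - y)\<bar> \<le> norm (x - y)" by (rule abs_Re_le_cmod)
  moreover have "norm y \<le> norm x + norm (x - y)" using norm_triangle_sub[of y x] norm_minus_commute[of y x] by simp
  ultimately show ?thesis by auto
qed

lemma Wz_holo: "Wz holomorphic_on {s. 1 < Re s}"
proof -
  have "(\<lambda>s. \<Sum>m. complex_of_real (aa m) powr (-s)) holomorphic_on {s. 1 < Re s}"
  proof (rule holo_suminf)
    show "open {s. 1 < Re s}" by (simp add: open_halfspace_Re_gt)
    show "(\<lambda>s. complex_of_real (aa i) powr (-s)) holomorphic_on {s. 1 < Re s}" for i
      by (intro holomorphic_intros)
    fix x assume x: "x \<in> {s. 1 < Re s}"
    define d where "d = (Re x - 1) / 2"
    have d: "d > 0" using x by (simp add: d_def)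
    have sub: "cball x d \<subseteq> {s. 1 < Re s}"
    proof
      fix y assume "y \<in> cball x d"
      then have "Re x - d \<le> Re y" using re_cball by blast
      moreover have "1 < Re x" using x by simp
      ultimately have "1 < Re y" unfolding d_def by argo
      then show "y \<in> {s. 1 < Re s}" by simp
    qed
    have b: "\<forall>i. \<forall>y\<in>cball x d. norm (complex_of_real (aa i) powr (-y)) \<le> aa i powr (-(1+d))"
    proof (intro allI ballI)
      fix i y assume "y \<in> cball x d"
      then have "Re x - d \<le> Re y" using re_cball by blast
      then have "-Re y \<le> -(1+d)" unfolding d_def by argo
      then have "aa i powr (-Re y) \<le> aa i powr (-(1+d))"
        using aa_ge[of i] by (intro powr_mono) auto
      then show "norm (complex_of_real (aa i) powr (-y)) \<le> aa i powr (-(1+d))"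
        by (simp add: norm_term)
    qed
    show "\<exists>d>0. cball x d \<subseteq> {s. 1 < Re s} \<and> (\<exists>M. summable M \<and> (\<forall>i. \<forall>y\<in>cball x d. norm (complex_of_real (aa i) powr (-y)) \<le> M i))"
    proof (intro exI[of _ d] conjI d sub exI[of _ "\<lambda>i. aa i powr (-(1+d))"])
      show "summable (\<lambda>i. aa i powr (-(1+d)))" using summable_Wr[of "1+d"] d by simp
      show "\<forall>i. \<forall>y\<in>cball x d. norm (complex_of_real (aa i) powr (-y)) \<le> aa i powr (-(1+d))"
        by (rule b)
    qed
  qed
  moreover have "Wz = (\<lambda>s. \<Sum>m. complex_of_real (aa m) powr (-s))"
    by (rule ext) (simp only: Wz_def)
  ultimately show ?thesis by (simp only:)
qed

definition cf :: "nat \<Rightarrow> complex \<Rightarrow> complex" where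
  "cf j s = (-1)^j * ((1 - s) gchoose j) / of_nat (j+1)"

definition hh :: "complex \<Rightarrow> complex" where
  "hh s = complex_of_real (1/2) powr (1 - s)"

definition G0 :: "complex \<Rightarrow> complex" where
  "G0 s = (s - 1) * Wz s"

lemma gchoose_Suc_rel: "((a::complex) gchoose (Suc k)) = (a gchoose k) * (a - of_nat k) / of_nat (Suc k)"
proof -
  have h: "a * (a gchoose k) = of_nat k * (a gchoose k) + of_nat (Suc k) * (a gchoose (Suc k))"
    by (rule gbinomial_mult_1)
  have h2: "of_nat (Suc k) * (a gchoose (Suc k)) = a * (a gchoose k) - of_nat k * (a gchoose k)"
    by (metis h add_diff_cancel_left')
  have h3: "a * (a gchoose k) - of_nat k * (a gchoose k) = (a gchoose k) * (a - of_nat k)"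
    by (simp add: right_diff_distrib mult.commute)
  have nz: "(of_nat (Suc k) :: complex) \<noteq> 0" by (simp only: of_nat_eq_0_iff nat.distinct not_False_eq_True)
  show ?thesis
    using h2 h3 nz by (simp add: eq_divide_eq mult.commute)
qed

lemma cf_G0: "cf j s * G0 (s + of_nat j) = (-1)^(Suc j) * ((1-s) gchoose (Suc j)) * Wz (s + of_nat j)"
  unfolding cf_def G0_def gchoose_Suc_rel
  by (simp add: field_simps del: of_nat_Suc)

lemma norm_poch_summable:
  fixes r :: real
  shows "summable (\<lambda>j. pochhammer r (Suc j) / fact (Suc j) * (2/3)^j)"
proof -
  have A: "summable (\<lambda>j. pochhammer r (j+1) / fact (j+1) * (2/3::real)^(j+1))"
    by (rule summable_ignore_initial_segment[OF summable_poch]) auto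
  have B: "summable (\<lambda>j. (3/2) * (pochhammer r (j+1) / fact (j+1) * (2/3::real)^(j+1)))"
    by (rule summable_mult[OF A])
  have eq: "(\<lambda>j. (3/2) * (pochhammer r (j+1) / fact (j+1) * (2/3::real)^(j+1))) = (\<lambda>j. pochhammer r (Suc j) / fact (Suc j) * (2/3)^j)"
    by (rule ext) (simp del: fact_Suc add: power_Suc)
  show ?thesis using B unfolding eq .
qed

lemma base_rec: assumes s: "1 < Re s" shows "(\<lambda>j. cf j s * G0 (s + of_nat j)) sums hh s"
proof -
  define f where "f j m = (-1)^(Suc j) * ((1-s) gchoose (Suc j)) * complex_of_real (aa m) powr (-(s + of_nat j))" for j m
  have sj: "1 < Re (s + of_nat j)" for j using s by simp
  have nf: "norm (f j m) = norm ((1-s) gchoose (Suc j)) * aa m powr (-(Re s + real j))" for j m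
    by (simp add: f_def norm_mult norm_power norm_term)
  have row: "summable (\<lambda>m. norm (f j m))" for j
    unfolding nf using summable_Wr[of "Re s + real j"] s by (intro summable_mult) auto
  have rowsum: "(\<Sum>m. f j m) = cf j s * G0 (s + of_nat j)" for j
  proof -
    have "(\<Sum>m. f j m) = (-1)^(Suc j) * ((1-s) gchoose (Suc j)) * Wz (s + of_nat j)"
      unfolding f_def Wz_def
      by (rule suminf_mult) (use summable_norm_cancel[OF Wz_summable[OF sj]] in simp)
    then show ?thesis by (simp add: cf_G0)
  qed
  have rownorm: "(\<Sum>m. norm (f j m)) \<le> pochhammer (norm (1-s)) (Suc j) / fact (Suc j) * (2/3)^j * Wr (Re s)" for j
  proof -
    have "(\<Sum>m. norm (f j m)) = norm ((1-s) gchoose (Suc j)) * Wr (Re s + real j)"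
      unfolding nf Wr_def using summable_Wr[of "Re s + real j"] s by (intro suminf_mult) auto
    also have "\<dots> \<le> pochhammer (norm (1-s)) (Suc j) / fact (Suc j) * ((2/3) powr (real j) * Wr (Re s))"
      apply (intro mult_mono norm_gchoose_le)
      using Wr_decay[of "Re s" "Re s + real j"] s Wr_nonneg[of "Re s"] Wr_nonneg[of "Re s + real j"]
      by (auto intro!: divide_nonneg_pos pochhammer_nonneg simp del: fact_Suc)
    finally show ?thesis by (simp add: powr_realpow)
  qed
  have tot: "summable (\<lambda>j. \<Sum>m. norm (f j m))"
  proof (rule summable_comparison_test[OF _ summable_mult2[OF norm_poch_summable[of "norm (1-s)"], of "Wr (Re s)"]])
    show "\<exists>N. \<forall>n\<ge>N. norm (\<Sum>m. norm (f n m)) \<le> pochhammer (norm (1-s)) (Suc n) / fact (Suc n) * (2/3)^n * Wr (Re s)"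
      using rownorm row by (auto simp del: fact_Suc simp add: suminf_nonneg)
  qed
  have col: "(\<lambda>j. f j m) sums (complex_of_real (real m + 1/2) powr (1-s) - complex_of_real (aa m) powr (1-s))" for m
  proof -
    have "(\<lambda>n. ((1-s) gchoose n) * of_real (aa m) powr ((1-s) - of_nat n) * of_real (-1) ^ n) sums
               of_real (aa m + -1) powr (1-s)"
      using aa_ge[of m] by (intro gen_binomial_complex'') auto
    then have "(\<lambda>n. ((1-s) gchoose (Suc n)) * of_real (aa m) powr ((1-s) - of_nat (Suc n)) * of_real (-1) ^ (Suc n)) sums
               (of_real (aa m + -1) powr (1-s) - of_real (aa m) powr (1-s))"
      by (subst sums_Suc_iff) simp
    moreover have "((1-s) gchoose (Suc n)) * of_real (aa m) powr ((1-s) - of_nat (Suc n)) * of_real (-1) ^ (Suc n) = f n m" for n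
    proof -
      have "(1-s) - of_nat (Suc n) = -(s + of_nat n)" by simp
      then show ?thesis unfolding f_def by (simp only:) (simp add: algebra_simps)
    qed
    ultimately show ?thesis by (simp add: aa_def add.commute)
  qed
  have sw: "(\<lambda>j. \<Sum>m. f j m) sums (\<Sum>m. \<Sum>j. f j m)"
    by (rule double_sum_swap[OF row tot])
  define F where "F m = complex_of_real (real m + 1/2) powr (1-s)" for m
  have Flim: "F \<longlonglongrightarrow> 0"
    unfolding F_def
    by (rule tendsto_neg_powr_complex_of_real)
       (use s filterlim_tendsto_add_at_top[OF tendsto_const filterlim_real_sequentially, of "1/2"] in \<open>auto simp: add.commute\<close>)
  have "(\<lambda>n. F n - F (Suc n)) sums (F 0 - 0)"
    by (rule telescope_sums'[OF Flim])
  moreover have "F n - F (Suc n) = (\<Sum>j. f j n)" for n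
  proof -
    have "real (Suc n) + 1/2 = aa n" by (simp add: aa_def)
    then show ?thesis using sums_unique[OF col[of n]] by (simp add: F_def)
  qed
  moreover have "F 0 = hh s" by (simp add: F_def hh_def)
  ultimately have "(\<Sum>m. \<Sum>j. f j m) = hh s" by (simp add: sums_iff)
  then show ?thesis using sw by (simp add: rowsum)
qed

lemma cf_holo: "(\<lambda>s. cf j s) holomorphic_on A"
  unfolding cf_def gbinomial_prod_rev by (intro holomorphic_intros) auto

lemma G0_holo: "G0 holomorphic_on {s. 1 < Re s}"
  unfolding G0_def[abs_def] by (intro holomorphic_intros holomorphic_on_subset[OF Wz_holo]) auto

lemma G0_shift_holo:
  assumes "\<And>s. s \<in> A \<Longrightarrow> 1 < Re (s + c)"
  shows "(\<lambda>s. G0 (s + c)) holomorphic_on A"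
proof -
  have "(G0 \<circ> (\<lambda>s. s + c)) holomorphic_on A"
    by (rule holomorphic_on_compose_gen[OF _ G0_holo]) (use assms in \<open>auto intro: holomorphic_intros\<close>)
  then show ?thesis by (simp add: o_def)
qed

lemma G0_norm: assumes "1 < Re t" shows "norm (G0 t) \<le> norm (t - 1) * Wr (Re t)"
  unfolding G0_def norm_mult using Wz_norm[OF assms] by (simp add: mult_left_mono)

lemma tail_bound:
  fixes y :: complex and d R :: real and J i :: nat
  assumes d: "0 < d" and y: "1 - real J + d \<le> Re y" and R: "norm y \<le> R"
  shows "norm (cf (i+J) y * G0 (y + of_nat (i+J))) \<le>
           (R+1) * Wr (1+d) * (pochhammer (R+1) (i+J) / fact (i+J) * (2/3)^i)"
proof -
  define k where "k = i + J"
  define t where "t = y + of_nat k"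
  have R0: "0 \<le> R" using R norm_ge_zero order_trans by blast
  have ret: "1 + d + real i \<le> Re t" using y by (simp add: t_def k_def)
  have t1: "1 < Re t" using ret d by simp
  have "norm (t - 1) \<le> R + real k + 1"
    unfolding t_def using R norm_triangle_ineq4[of "y + of_nat k" 1] norm_triangle_ineq[of y "of_nat k"]
    by simp
  have W: "Wr (Re t) \<le> (2/3)^i * Wr (1+d)"
  proof -
    have "Wr (Re t) \<le> (2/3) powr (Re t - (1+d)) * Wr (1+d)"
      using Wr_decay[of "1+d" "Re t"] ret d by simp
    also have "(2/3::real) powr (Re t - (1+d)) \<le> (2/3) powr (real i)"
      using ret by (intro powr_mono') auto
    then have "(2/3) powr (Re t - (1+d)) * Wr (1+d) \<le> (2/3) powr (real i) * Wr (1+d)"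
      using Wr_nonneg[of "1+d"] d by (intro mult_right_mono) auto
    finally show ?thesis by (simp add: powr_realpow)
  qed
  have G: "norm (G0 t) \<le> (R + real k + 1) * ((2/3)^i * Wr (1+d))"
  proof -
    have "norm (G0 t) \<le> norm (t - 1) * Wr (Re t)" by (rule G0_norm[OF t1])
    also have "\<dots> \<le> (R + real k + 1) * ((2/3)^i * Wr (1+d))"
      using \<open>norm (t - 1) \<le> R + real k + 1\<close> W Wr_nonneg[OF t1] R0
      by (intro mult_mono) auto
    finally show ?thesis .
  qed
  have C: "norm (cf k y) \<le> pochhammer (R+1) k / fact k / (real k + 1)"
  proof -
    have "norm (cf k y) = norm ((1-y) gchoose k) / (real k + 1)"
      using norm_of_nat[of "Suc k", where 'a=complex] by (simp add: cf_def norm_divide norm_mult norm_power)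
    also have "norm ((1-y) gchoose k) \<le> pochhammer (norm (1-y)) k / fact k"
      by (rule norm_gchoose_le)
    also have "pochhammer (norm (1-y)) k \<le> pochhammer (R+1) k"
      using R norm_triangle_ineq4[of 1 y] by (intro poch_mono) auto
    finally show ?thesis by (simp add: divide_right_mono)
  qed
  have "norm (cf k y * G0 t) \<le> pochhammer (R+1) k / fact k / (real k + 1) * ((R + real k + 1) * ((2/3)^i * Wr (1+d)))"
    unfolding norm_mult using C G R0 by (intro mult_mono) (auto intro!: divide_nonneg_pos pochhammer_nonneg)
  also have "\<dots> = pochhammer (R+1) k / fact k * ((R + real k + 1) / (real k + 1)) * ((2/3)^i * Wr (1+d))"
    by (simp add: field_simps)
  also have "\<dots> \<le> pochhammer (R+1) k / fact k * (R + 1) * ((2/3)^i * Wr (1+d))"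
  proof -
    have "(R + real k + 1) / (real k + 1) \<le> R + 1"
      using R0 by (simp add: field_simps)
    then show ?thesis
      using R0 Wr_nonneg[of "1+d"] d
      by (intro mult_right_mono mult_left_mono) (auto intro!: divide_nonneg_pos pochhammer_nonneg)
  qed
  finally show ?thesis by (simp add: k_def t_def mult_ac)
qed


lemma summable_M: fixes r :: real shows "summable (\<lambda>i. pochhammer r (i+J) / fact (i+J) * (2/3)^i)"
proof -
  have A: "summable (\<lambda>i. pochhammer r (i+J) / fact (i+J) * (2/3::real)^(i+J))"
    by (rule summable_ignore_initial_segment[OF summable_poch]) auto
  have B: "summable (\<lambda>i. pochhammer r (i+J) / fact (i+J) * (2/3::real)^(i+J) * (3/2)^J)"
    by (rule summable_mult2[OF A])
  have eq: "pochhammer r (i+J) / fact (i+J) * (2/3::real)^(i+J) * (3/2)^J = pochhammer r (i+J) / fact (i+J) * (2/3)^i" for i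
  proof -
    have "(2/3::real)^(i+J) * (3/2)^J = (2/3)^i * ((2/3)^J * (3/2)^J)" by (simp add: power_add)
    also have "(2/3::real)^J * (3/2)^J = 1" by (simp flip: power_mult_distrib)
    finally show ?thesis by simp
  qed
  show ?thesis using B unfolding eq .
qed

lemma tail_summable:
  assumes "1 - real J < Re s"
  shows "summable (\<lambda>i. norm (cf (i+J) s * G0 (s + of_nat (i+J))))"
proof (rule summable_comparison_test[OF _ summable_mult[OF summable_M[of "norm s + 1" J], of "(norm s + 1) * Wr (1 + (Re s - (1 - real J)))"]])
  show "\<exists>N. \<forall>n\<ge>N. norm (norm (cf (n+J) s * G0 (s + of_nat (n+J)))) \<le>
     (norm s + 1) * Wr (1 + (Re s - (1 - real J))) * (pochhammer (norm s + 1) (n+J) / fact (n+J) * (2/3)^n)"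
    using tail_bound[of "Re s - (1 - real J)" J s "norm s"] assms by auto
qed

lemma tail_holo:
  "(\<lambda>s. \<Sum>i. cf (i+J) s * G0 (s + of_nat (i+J))) holomorphic_on {s. 1 - real J < Re s}"
proof (rule holo_suminf)
  show "open {s. 1 - real J < Re s}" by (simp add: open_halfspace_Re_gt)
  show "(\<lambda>s. cf (i+J) s * G0 (s + of_nat (i+J))) holomorphic_on {s. 1 - real J < Re s}" for i
    by (intro holomorphic_intros cf_holo G0_shift_holo) auto
  fix x assume x: "x \<in> {s. 1 - real J < Re s}"
  define d where "d = (Re x - (1 - real J)) / 2"
  define R where "R = norm x + d"
  have d: "d > 0" using x by (simp add: d_def)
  have cb: "1 - real J + d \<le> Re y \<and> norm y \<le> R" if "y \<in> cball x d" for y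
  proof -
    have "Re x - d \<le> Re y \<and> norm y \<le> norm x + d" using re_cball[OF that] .
    then show ?thesis unfolding d_def R_def by argo
  qed
  have sub: "cball x d \<subseteq> {s. 1 - real J < Re s}"
  proof
    fix y assume "y \<in> cball x d"
    then have "1 - real J + d \<le> Re y" using cb by blast
    then show "y \<in> {s. 1 - real J < Re s}" using d by simp
  qed
  show "\<exists>d>0. cball x d \<subseteq> {s. 1 - real J < Re s} \<and> (\<exists>M. summable M \<and> (\<forall>i. \<forall>y\<in>cball x d. norm (cf (i+J) y * G0 (y + of_nat (i+J))) \<le> M i))"
  proof (intro exI[of _ d] conjI d sub exI[of _ "\<lambda>i. (R+1) * Wr (1+d) * (pochhammer (R+1) (i+J) / fact (i+J) * (2/3)^i)"])
    show "summable (\<lambda>i. (R+1) * Wr (1+d) * (pochhammer (R+1) (i+J) / fact (i+J) * (2/3)^i))"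
      by (rule summable_mult[OF summable_M])
    show "\<forall>i. \<forall>y\<in>cball x d. norm (cf (i+J) y * G0 (y + of_nat (i+J))) \<le> (R+1) * Wr (1+d) * (pochhammer (R+1) (i+J) / fact (i+J) * (2/3)^i)"
    proof (intro allI ballI)
      fix i y assume "y \<in> cball x d"
      then have "1 - real J + d \<le> Re y" "norm y \<le> R" using cb by auto
      then show "norm (cf (i+J) y * G0 (y + of_nat (i+J))) \<le> (R+1) * Wr (1+d) * (pochhammer (R+1) (i+J) / fact (i+J) * (2/3)^i)"
        by (intro tail_bound d)
    qed
  qed
qed


fun Gs :: "nat \<Rightarrow> complex \<Rightarrow> complex" where
  "Gs 0 s = G0 s"
| "Gs (Suc N) s = hh s - (\<Sum>j. cf (Suc j) s * Gs N (s + of_nat (Suc j)))"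

definition Hs :: "nat \<Rightarrow> complex set" where "Hs N = {s. 1 - real N < Re s}"

lemma cf_0 [simp]: "cf 0 s = 1" by (simp add: cf_def)

lemma agree:
  assumes "(\<lambda>j. cf j s * Gs N (s + of_nat j)) sums hh s"
  shows "Gs (Suc N) s = Gs N s"
proof -
  have "(\<lambda>j. cf (Suc j) s * Gs N (s + of_nat (Suc j))) sums (hh s - Gs N s)"
    using assms by (subst sums_Suc_iff) simp
  then show ?thesis by (simp add: sums_iff)
qed

lemma Hs_shift: "s \<in> Hs (Suc N) \<Longrightarrow> s + of_nat (Suc j) \<in> Hs N"
  by (simp add: Hs_def)

lemma Gs_props:
  "Gs N holomorphic_on Hs N \<and> (\<forall>s\<in>Hs N. (\<lambda>j. cf j s * Gs N (s + of_nat j)) sums hh s)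
   \<and> (\<forall>t. 1 < Re t \<longrightarrow> Gs N t = G0 t)"
proof (induction N)
  case 0
  have "Hs 0 = {s. 1 < Re s}" by (simp add: Hs_def)
  then show ?case using G0_holo base_rec by simp
next
  case (Suc N)
  have hol: "Gs N holomorphic_on Hs N" and rec: "\<And>s. s \<in> Hs N \<Longrightarrow> (\<lambda>j. cf j s * Gs N (s + of_nat j)) sums hh s"
    and e0: "\<And>t. 1 < Re t \<Longrightarrow> Gs N t = G0 t" using Suc.IH by auto
  have e1: "Gs (Suc N) t = G0 t" if "1 < Re t" for t
  proof -
    have "t \<in> Hs N" using that by (simp add: Hs_def)
    then show ?thesis using agree[OF rec] e0[OF that] by simp
  qed
  have e2: "Gs (Suc N) (s + of_nat (Suc j)) = Gs N (s + of_nat (Suc j))" if "s \<in> Hs (Suc N)" for s j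
    using agree[OF rec[OF Hs_shift[OF that]]] .
  have tl: "cf (Suc (i + N)) s * Gs N (s + of_nat (Suc (i + N))) = cf (i + Suc N) s * G0 (s + of_nat (i + Suc N))"
    if "s \<in> Hs (Suc N)" for s i
  proof -
    have "1 < Re (s + of_nat (Suc (i + N)))" using that by (simp add: Hs_def)
    then show ?thesis using e0 by simp
  qed
  have summ: "summable (\<lambda>j. cf (Suc j) s * Gs N (s + of_nat (Suc j)))" if s: "s \<in> Hs (Suc N)" for s
  proof -
    have "summable (\<lambda>i. cf (i + Suc N) s * G0 (s + of_nat (i + Suc N)))"
      using tail_summable[of "Suc N" s] s summable_norm_cancel by (auto simp: Hs_def)
    then have "summable (\<lambda>i. cf (Suc (i + N)) s * Gs N (s + of_nat (Suc (i + N))))"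
      by (simp only: tl[OF s])
    then show ?thesis
      using summable_iff_shift[of "\<lambda>j. cf (Suc j) s * Gs N (s + of_nat (Suc j))" N] by simp
  qed
  have rec2: "(\<lambda>j. cf j s * Gs (Suc N) (s + of_nat j)) sums hh s" if s: "s \<in> Hs (Suc N)" for s
  proof -
    have "(\<lambda>j. cf (Suc j) s * Gs (Suc N) (s + of_nat (Suc j))) sums (\<Sum>j. cf (Suc j) s * Gs N (s + of_nat (Suc j)))"
      using summable_sums[OF summ[OF s]] e2[OF s] by simp
    then have "(\<lambda>j. cf j s * Gs (Suc N) (s + of_nat j)) sums ((\<Sum>j. cf (Suc j) s * Gs N (s + of_nat (Suc j))) + cf 0 s * Gs (Suc N) (s + of_nat 0))"
      by (subst sums_Suc_iff[symmetric])
    then show ?thesis by simp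
  qed
  have hol2: "Gs (Suc N) holomorphic_on Hs (Suc N)"
  proof (rule holomorphic_transform)
    show "(\<lambda>s. hh s - (\<Sum>j<N. cf (Suc j) s * Gs N (s + of_nat (Suc j))) - (\<Sum>i. cf (i + Suc N) s * G0 (s + of_nat (i + Suc N))))
          holomorphic_on Hs (Suc N)"
    proof (intro holomorphic_intros cf_holo)
      show "(\<lambda>s. hh s) holomorphic_on Hs (Suc N)" unfolding hh_def by (intro holomorphic_intros)
      show "(\<lambda>s. \<Sum>i. cf (i + Suc N) s * G0 (s + of_nat (i + Suc N))) holomorphic_on Hs (Suc N)"
        unfolding Hs_def by (rule tail_holo)
      fix j
      have "(Gs N \<circ> (\<lambda>s. s + of_nat (Suc j))) holomorphic_on Hs (Suc N)"
        by (rule holomorphic_on_compose_gen[OF _ hol]) (use Hs_shift in \<open>auto intro: holomorphic_intros simp del: of_nat_Suc\<close>)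
      then show "(\<lambda>s. Gs N (s + of_nat (Suc j))) holomorphic_on Hs (Suc N)" by (simp add: o_def)
    qed
    fix s assume s: "s \<in> Hs (Suc N)"
    have "(\<Sum>j. cf (Suc j) s * Gs N (s + of_nat (Suc j))) =
          (\<Sum>i. cf (Suc (i + N)) s * Gs N (s + of_nat (Suc (i + N)))) + (\<Sum>j<N. cf (Suc j) s * Gs N (s + of_nat (Suc j)))"
      by (rule suminf_split_initial_segment[OF summ[OF s]])
    also have "(\<Sum>i. cf (Suc (i + N)) s * Gs N (s + of_nat (Suc (i + N)))) = (\<Sum>i. cf (i + Suc N) s * G0 (s + of_nat (i + Suc N)))"
      by (simp only: tl[OF s])
    finally show "hh s - (\<Sum>j<N. cf (Suc j) s * Gs N (s + of_nat (Suc j))) - (\<Sum>i. cf (i + Suc N) s * G0 (s + of_nat (i + Suc N))) = Gs (Suc N) s"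
      by simp
  qed
  show ?case using hol2 rec2 e1 by blast
qed


lemma Hs_mono: "s \<in> Hs N \<Longrightarrow> N \<le> M \<Longrightarrow> s \<in> Hs M"
  by (auto simp: Hs_def)

lemma Gs_stable: "s \<in> Hs N \<Longrightarrow> Gs (N + k) s = Gs N s"
proof (induction k)
  case 0 then show ?case by simp
next
  case (Suc k)
  have "s \<in> Hs (N + k)" using Suc.prems Hs_mono by simp
  then have "Gs (Suc (N + k)) s = Gs (N + k) s" using agree Gs_props by blast
  then show ?case using Suc by simp
qed

lemma Gs_eq: "s \<in> Hs N \<Longrightarrow> s \<in> Hs M \<Longrightarrow> Gs N s = Gs M s"
proof (cases "N \<le> M")
  case True
  assume "s \<in> Hs N"
  then show ?thesis using Gs_stable[of s N "M - N"] True by simp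
next
  case False
  assume "s \<in> Hs M"
  then show ?thesis using Gs_stable[of s M "N - M"] False by simp
qed

definition Nof :: "complex \<Rightarrow> nat" where "Nof s = nat \<lceil>1 - Re s\<rceil> + 1"

lemma in_Hs_Nof: "s \<in> Hs (Nof s)"
proof -
  have "1 - Re s \<le> real (nat \<lceil>1 - Re s\<rceil>)" by linarith
  then show ?thesis by (simp add: Hs_def Nof_def)
qed

definition GG :: "complex \<Rightarrow> complex" where "GG s = Gs (Nof s) s"

lemma GG_eq: "s \<in> Hs N \<Longrightarrow> GG s = Gs N s"
  unfolding GG_def using Gs_eq in_Hs_Nof by blast

lemma open_Hs: "open (Hs N)"
  unfolding Hs_def by (rule open_halfspace_Re_gt)

lemma GG_holo: "GG holomorphic_on UNIV"
proof -
  have "\<exists>f'. DERIV GG x :> f'" for x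
  proof -
    have "GG holomorphic_on Hs (Nof x)"
    proof (rule holomorphic_transform)
      show "Gs (Nof x) holomorphic_on Hs (Nof x)" using Gs_props[of "Nof x"] by blast
      show "Gs (Nof x) y = GG y" if "y \<in> Hs (Nof x)" for y using GG_eq[OF that] by simp
    qed
    then have "GG field_differentiable (at x)"
      using holomorphic_on_imp_differentiable_at open_Hs in_Hs_Nof by blast
    then show ?thesis by (simp add: field_differentiable_def)
  qed
  then show ?thesis by (simp add: holomorphic_on_open)
qed

lemma GG_rec: "(\<lambda>j. cf j s * GG (s + of_nat j)) sums hh s"
proof -
  have "GG (s + of_nat j) = Gs (Nof s) (s + of_nat j)" for j
    using in_Hs_Nof[of s] by (intro GG_eq) (auto simp: Hs_def)
  then show ?thesis using Gs_props[of "Nof s"] in_Hs_Nof[of s] by simp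
qed

lemma GG_G0: "1 < Re t \<Longrightarrow> GG t = G0 t"
  using GG_eq[of t 0] Gs_props[of 0] by (simp add: Hs_def)


definition FF :: "complex \<Rightarrow> complex" where
  "FF s = complex_of_real (1/2) powr (-s) + GG s / (s - 1)"

lemma FF_holo: "FF holomorphic_on (- {1})"
  unfolding FF_def[abs_def]
  by (intro holomorphic_intros holomorphic_on_subset[OF GG_holo]) auto

lemma FF_series: assumes s: "1 < Re s"
  shows "(\<lambda>m. complex_of_real (real m + 1/2) powr (-s)) sums FF s"
proof -
  have W: "(\<lambda>m. complex_of_real (aa m) powr (-s)) sums Wz s"
    unfolding Wz_def by (rule summable_sums[OF summable_norm_cancel[OF Wz_summable[OF s]]])
  have "real (Suc m) + 1/2 = aa m" for m by (simp add: aa_def)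
  then have "(\<lambda>m. complex_of_real (real (Suc m) + 1/2) powr (-s)) sums Wz s"
    using W by simp
  then have "(\<lambda>m. complex_of_real (real m + 1/2) powr (-s)) sums (Wz s + complex_of_real (real 0 + 1/2) powr (-s))"
    by (subst sums_Suc_iff[symmetric])
  moreover have "GG s / (s - 1) = Wz s"
  proof -
    have "s \<noteq> 1" using s by auto
    then show ?thesis using GG_G0[OF s] by (simp add: G0_def)
  qed
  ultimately show ?thesis by (simp add: FF_def add.commute)
qed

lemma xi_FF: assumes "z \<noteq> 1" shows "xi z = FF z"
proof -
  have ext: "xi_series_ext FF"
    unfolding xi_series_ext_def using FF_holo FF_series by blast
  have uniq: "f z = FF z" if f: "xi_series_ext f" for f
  proof (rule analytic_continuation_open[where s="{s. 1 < Re s}" and s'="- {1}" and f=f and g=FF])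
    show "open {s. 1 < Re s}" by (rule open_halfspace_Re_gt)
    show "open (- {1::complex})" by auto
    show "{s. 1 < Re s} \<noteq> {}" by (auto intro!: exI[of _ 2])
    show "connected (- {1::complex})" by (rule connected_punctured_universe) simp
    show "{s. 1 < Re s} \<subseteq> - {1}" by auto
    show "f holomorphic_on - {1}" using f by (simp add: xi_series_ext_def)
    show "FF holomorphic_on - {1}" by (rule FF_holo)
    show "z \<in> - {1}" using assms by simp
    fix w assume "w \<in> {s. 1 < Re s}"
    then have "1 < Re w" by simp
    then have a: "(\<lambda>m. complex_of_real (real m + 1/2) powr (-w)) sums f w"
      using f unfolding xi_series_ext_def by blast
    show "f w = FF w" by (rule sums_unique2[OF a FF_series[OF \<open>1 < Re w\<close>]])
  qed
  show ?thesis unfolding xi_def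
  proof (rule the_equality)
    show "\<exists>f. xi_series_ext f \<and> f z = FF z" using ext by blast
    show "\<And>y. \<exists>f. xi_series_ext f \<and> f z = y \<Longrightarrow> y = FF z" using uniq by blast
  qed
qed


lemma cf_int: "cf j (1 - of_nat N) = (-1)^j * of_nat (N choose j) / of_nat (j+1)"
  by (simp add: cf_def binomial_gbinomial)

lemma half_powr: "complex_of_real (1/2) powr (of_nat k) = (1/2)^k"
  by (simp add: powr_nat)

lemma rec_int:
  "(\<Sum>j\<le>N. (-1)^j * of_nat (N choose j) / of_nat (j+1) * GG (of_nat (Suc j) - of_nat N)) = ((1/2)^N :: complex)"
proof -
  have S: "(\<lambda>j. cf j (1 - of_nat N) * GG (1 - of_nat N + of_nat j)) sums hh (1 - of_nat N)"
    by (rule GG_rec)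
  have eq: "cf j (1 - of_nat N) * GG (1 - of_nat N + of_nat j) = (-1)^j * of_nat (N choose j) / of_nat (j+1) * GG (of_nat (Suc j) - of_nat N)" for j
  proof -
    have "1 - of_nat N + of_nat j = (of_nat (Suc j) - of_nat N :: complex)" by simp
    then show ?thesis by (simp only: cf_int)
  qed
  have S2: "(\<lambda>j. (-1)^j * of_nat (N choose j) / of_nat (j+1) * GG (of_nat (Suc j) - of_nat N)) sums hh (1 - of_nat N)"
    using S by (simp only: eq)
  have S3: "(\<lambda>j. (-1)^j * of_nat (N choose j) / of_nat (j+1) * GG (of_nat (Suc j) - of_nat N)) sums
      (\<Sum>j\<le>N. (-1)^j * of_nat (N choose j) / of_nat (j+1) * GG (of_nat (Suc j) - of_nat N) :: complex)"
    by (rule sums_finite) (auto simp: binomial_eq_0)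
  have "hh (1 - of_nat N) = (1/2)^N"
    unfolding hh_def by (simp add: half_powr)
  then show ?thesis using sums_unique2[OF S3 S2] by simp
qed

lemma GG_1: "GG 1 = 1"
  using rec_int[of 0] by simp

lemma GG_0: "GG 0 = 1"
proof -
  have "(\<Sum>j\<le>1. (-1)^j * of_nat (1 choose j) / of_nat (j+1) * GG (of_nat (Suc j) - of_nat 1)) = ((1/2)^1 :: complex)"
    by (rule rec_int)
  then have "GG 0 - 1/2 * GG 1 = 1/2" by (simp add: atMost_Suc)
  then show ?thesis using GG_1 by simp
qed

lemma xi_int:
  assumes "i < n"
  shows "xi (of_int (int i - int n)) = (1/2)^(n-i) + GG (of_nat i - of_nat n) / (of_nat i - of_nat n - 1)"
proof -
  have z: "(of_int (int i - int n) :: complex) = of_nat i - of_nat n" by simp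
  have ne: "(of_nat i - of_nat n :: complex) \<noteq> 1"
  proof
    assume "(of_nat i - of_nat n :: complex) = 1"
    then have "Re (of_nat i - of_nat n :: complex) = 1" by simp
    then show False using assms by simp
  qed
  have m: "- (of_nat i - of_nat n :: complex) = of_nat (n - i)" using assms by (simp add: of_nat_diff)
  show ?thesis unfolding z xi_FF[OF ne] FF_def m half_powr ..
qed


lemma binom_rel: "of_nat (Suc k) * of_nat (n choose Suc k) = (of_nat (n - k) * of_nat (n choose k) :: complex)"
proof -
  have "Suc k * (n choose Suc k) = (n - k) * (n choose k)"
    using binomial_absorption[of k n] binomial_absorb_comp[of n k] by simp
  then show ?thesis by (metis of_nat_mult)
qed

theorem lemma2p2:
  fixes n :: nat
  assumes "n \<ge> 2"
  shows "(\<Sum>i=1..n-1. (-1)^i * of_nat (n choose i) * xi (of_int (int i - int n)))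
         = (-1)^(n+1) / of_nat (n+1) + (-1)^n / 2^n"
proof -
  obtain m where n: "n = Suc (Suc m)" using assms by (metis add_2_eq_Suc le_Suc_ex)
  define c :: "nat \<Rightarrow> complex" where "c j = (-1)^j * of_nat (n choose j) / of_nat (j+1)" for j
  define g :: "nat \<Rightarrow> complex" where "g k = GG (of_nat k - of_nat n)" for k
  define a :: "nat \<Rightarrow> complex" where "a i = (-1)^i * of_nat (n choose i) * (1/2)^(n-i)" for i
  have trm: "(-1)^i * of_nat (n choose i) * xi (of_int (int i - int n)) = a i + c (i - 1) * g i"
    if i: "i \<in> {1..n-1}" for i
  proof -
    obtain k where k: "i = Suc k" using i by (cases i) auto
    have kn: "k < n" using i k n by auto
    have nk: "(of_nat (n - k) :: complex) \<noteq> 0" using kn by simp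
    have d: "(of_nat i - of_nat n - 1 :: complex) = - of_nat (n - k)" using kn k by (simp add: of_nat_diff)
    have x: "xi (of_int (int i - int n)) = (1/2)^(n-i) + g i / (- of_nat (n - k))"
      using xi_int[of i n] i n d by (auto simp: g_def)
    have r: "of_nat (n choose Suc k) = (of_nat (n - k) * of_nat (n choose k) / of_nat (Suc k) :: complex)"
      using binom_rel[of k n] by (simp add: field_simps del: of_nat_Suc)
    show ?thesis
      unfolding x unfolding a_def c_def k r using nk
      by (simp add: field_simps del: of_nat_Suc)
  qed
  have L: "(\<Sum>i=1..n-1. (-1)^i * of_nat (n choose i) * xi (of_int (int i - int n))) =
           (\<Sum>i=1..n-1. a i) + (\<Sum>i=1..n-1. c (i - 1) * g i)"
    by (subst sum.cong[OF refl trm]) (simp_all add: sum.distrib)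
  have B: "(\<Sum>i=1..n-1. c (i - 1) * g i) = (\<Sum>k\<le>m. c k * g (Suc k))"
  proof -
    have "(\<Sum>i=1..n-1. c (i - 1) * g i) = (\<Sum>i=Suc 0..Suc m. c (i - 1) * g i)" by (simp add: n)
    also have "\<dots> = (\<Sum>k=0..m. c k * g (Suc k))" by (simp only: sum.atLeast_Suc_atMost_Suc_shift o_def diff_Suc_1)
    finally show ?thesis by (simp add: atLeast0AtMost)
  qed
  have R: "(\<Sum>j\<le>n. c j * g (Suc j)) = (1/2)^n"
    using rec_int[of n] by (simp add: c_def g_def)
  have gn: "g (Suc (Suc m)) = 1" using GG_0 by (simp add: g_def n)
  have gn1: "g (Suc (Suc (Suc m))) = 1" using GG_1 by (simp add: g_def n)
  have cm: "c (Suc m) = (-1)^(Suc m)"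
  proof -
    have "n choose Suc m = n" using n by (simp add: binomial_Suc_n)
    moreover have "(2 + of_nat m :: complex) \<noteq> 0"
      using of_nat_eq_0_iff[of "Suc (Suc m)", where 'a=complex] by simp
    ultimately show ?thesis by (simp add: c_def n del: binomial_Suc_Suc)
  qed
  have R2: "(\<Sum>k\<le>m. c k * g (Suc k)) = (1/2)^n - (-1)^(Suc m) - (-1)^n / of_nat (n+1)"
  proof -
    have "(\<Sum>j\<le>n. c j * g (Suc j)) = (\<Sum>k\<le>m. c k * g (Suc k)) + c (Suc m) * g (Suc (Suc m)) + c n * g (Suc n)"
      by (simp add: n)
    then have "(\<Sum>k\<le>m. c k * g (Suc k)) = (1/2)^n - c (Suc m) * g (Suc (Suc m)) - c n * g (Suc n)"
      using R by (simp add: algebra_simps)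
    moreover have "c n = (-1)^n / of_nat (n+1)" by (simp add: c_def)
    moreover have "g (Suc n) = 1" using gn1 n by simp
    ultimately show ?thesis using gn cm by simp
  qed
  have A0: "(\<Sum>i=1..n-1. a i) = (-1/2)^n - (1/2)^n - (-1)^n"
  proof -
    have bin: "(-1 + 1/2 :: complex)^n = (\<Sum>k\<le>n. of_nat (n choose k) * (-1)^k * (1/2)^(n-k))"
      by (rule binomial_ring)
    have e: "of_nat (n choose k) * (-1)^k * (1/2)^(n-k) = a k" for k by (simp add: a_def)
    have "(\<Sum>k\<le>n. a k) = a 0 + (\<Sum>i=1..n-1. a i) + a n"
    proof -
      have "(\<Sum>k\<le>n. a k) = (\<Sum>k=0..Suc m. a k) + a n" by (simp add: n atLeast0AtMost)
      also have "(\<Sum>k=0..Suc m. a k) = a 0 + (\<Sum>k=Suc 0..Suc m. a k)" by (rule sum.atLeast_Suc_atMost) simp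
      finally show ?thesis by (simp add: n)
    qed
    moreover have "(\<Sum>k\<le>n. a k) = (-1/2)^n" using bin e by simp
    moreover have "a 0 = (1/2)^n" by (simp add: a_def)
    moreover have "a n = (-1)^n" by (simp add: a_def)
    ultimately show ?thesis by (simp add: algebra_simps)
  qed
  have A: "(\<Sum>i=1..n-1. a i) = (-1)^n / 2^n - (1/2)^n - (-1)^n"
  proof -
    have "(-1/2::complex)^n = (-1)^n / 2^n" by (rule power_divide)
    then show ?thesis unfolding A0 by simp
  qed
  show ?thesis
    unfolding L B R2 A by (simp add: n power_divide field_simps)
qed

end
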